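(* In the discrete-time setting described in the context, let $X:=\prod_{k=0}^NX_k\times\prod_{k=0}^{N-1}(L^2_{\mathcal F_k})^m$. For every $(x,u)\in X$ and $\delta\in\prod_{k=0}^NX_k$ there exists a unique $z\in\prod_{k=0}^NX_k$ such that $Dg(x,u)(z,0)=\delta$. Moreover there exists $c>0$, independent of $(x,u,z,\delta)$, such that $\sum_{k=0}^N\|z_k\|_{X_k}\le c\sum_{k=0}^N\|\delta_k\|_{X_k}$. In particular, for every closed set $\mathcal V\subseteq\prod_{k=0}^{N-1}(L^2_{\mathcal F_k})^m$, $$d\Big((x,u),\,g^{-1}(y)\cap\Big(\prod_{k=0}^NX_k\times\mathcal V\Big)\Big)\le c\,\|g(x,u)-y\|\quad\forall x,y\in\prod_{k=0}^NX_k,\ u\in\mathcal V.$$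
   Context: $(\Omega,\mathcal F,\mathbb P)$ is a probability space; $w_1,\dots,w_N$ are independent $\mathbb R^d$-valued random variables with independent coordinates, $\mathbb E(w_k^i)=0$, $\mathbb E|w_k^i|^2=1$; $w_0:=0$, $\mathcal F_k=\sigma(w_0,\dots,w_k)$, $L^2_{\mathcal F_k}$ the $\mathcal F_k$-measurable square-integrable random variables. $X_0=\mathbb R^n$, $X_k=\{y^0+\sum_{i=1}^dy^iw_k^i:y^i\in(L^2_{\mathcal F_{k-1}})^n\}$ ($k\ge1$) with $\|x\|_{X_k}^2=\mathbb E|x|^2$; products carry the sum of the norms ($\|y\|=\sum_k\|y_k\|_{X_k}$ on $\prod X_k$), and $d$ is the distance in $X$. $b:\{0,\dots,N-1\}\times\mathbb R^n\times\mathbb R^m\to\mathbb R^n$ and $\sigma:\{0,\dots,N-1\}\times\mathbb R^n\times\mathbb R^m\to\mathbb R^{n\times d}$ (columns $\sigma^i$) are Borel, $C^1$ in $(x,u)$, with $|\psi(k,x,u)|\le c_1(1+|x|+|u|)$ and $|\psi_x|+|\psi_u|\le c_1$ for $\psi\in\{b,\sigma^i\}$. With $\hat x_0\in\mathbb R^n$, $g:X\to\prod_kX_k$ is $g_0(x,u)=\hat x_0-x_0$, $g_{k+1}(x,u)=b(k,x_k,u_k)+\sigma(k,x_k,u_k)w_{k+1}-x_{k+1}$; its Gâteaux derivative is $Dg_0(x,u)(z,v)=-z_0$, $Dg_{k+1}(x,u)(z,v)=b_x z_k+b_uv_k+\sum_i(\sigma^i_xz_k+\sigma^i_uv_k)w_{k+1}^i-z_{k+1}$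 (derivatives evaluated at $(k,x_k,u_k)$). *)

theory Defs
  imports "HOL-Probability.Probability"
begin

text \<open>Filtration F_k = sigma(w_0,...,w_k) with w_0 = 0, as a sigma-algebra on the sample space.\<close>
definition filt :: "'a measure \<Rightarrow> (nat \<Rightarrow> 'a \<Rightarrow> real^'d) \<Rightarrow> nat \<Rightarrow> 'a measure" where
  "filt M w k = sigma (space M) (\<Union>j\<in>{1..k}. {w j -` A \<inter> space M | A. A \<in> sets borel})"

definition L2F :: "'a measure \<Rightarrow> (nat \<Rightarrow> 'a \<Rightarrow> real^'d) \<Rightarrow> nat \<Rightarrow> ('a \<Rightarrow> 'v::euclidean_space) set" where
  "L2F M w k = {f. f \<in> borel_measurable (filt M w k) \<and> integrable M (\<lambda>\<omega>. (norm (f \<omega>))\<^sup>2)}"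

text \<open>The spaces X_k; X_0 = R^n realised as the deterministic (constant) random vectors.\<close>
definition Xsp :: "'a measure \<Rightarrow> (nat \<Rightarrow> 'a \<Rightarrow> real^'d) \<Rightarrow> nat \<Rightarrow> ('a \<Rightarrow> 'v::euclidean_space) set" where
  "Xsp M w k = (if k = 0 then {\<lambda>\<omega>. c | c. True}
     else {\<lambda>\<omega>. y0 \<omega> + (\<Sum>i\<in>UNIV. (w k \<omega> $ i) *\<^sub>R yi i \<omega>) | y0 yi.
             y0 \<in> L2F M w (k - 1) \<and> (\<forall>i. yi i \<in> L2F M w (k - 1))})"

definition nrm :: "'a measure \<Rightarrow> ('a \<Rightarrow> 'v::real_normed_vector) \<Rightarrow> real" where
  "nrm M f = sqrt (\<integral>\<omega>. (norm (f \<omega>))\<^sup>2 \<partial>M)"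

definition nX :: "'a measure \<Rightarrow> nat \<Rightarrow> (nat \<Rightarrow> 'a \<Rightarrow> 'v::real_normed_vector) \<Rightarrow> real" where
  "nX M N x = (\<Sum>k\<le>N. nrm M (x k))"

definition nU :: "'a measure \<Rightarrow> nat \<Rightarrow> (nat \<Rightarrow> 'a \<Rightarrow> 'v::real_normed_vector) \<Rightarrow> real" where
  "nU M N u = (\<Sum>k<N. nrm M (u k))"

definition prodX :: "'a measure \<Rightarrow> (nat \<Rightarrow> 'a \<Rightarrow> real^'d) \<Rightarrow> nat \<Rightarrow> (nat \<Rightarrow> 'a \<Rightarrow> 'v::euclidean_space) set" where
  "prodX M w N = {x. \<forall>k\<le>N. x k \<in> Xsp M w k}"

definition prodU :: "'a measure \<Rightarrow> (nat \<Rightarrow> 'a \<Rightarrow> real^'d) \<Rightarrow> nat \<Rightarrow> (nat \<Rightarrow> 'a \<Rightarrow> 'v::euclidean_space) set" where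
  "prodU M w N = {u. \<forall>k<N. u k \<in> L2F M w k}"

definition distX :: "'a measure \<Rightarrow> nat \<Rightarrow> (nat \<Rightarrow> 'a \<Rightarrow> 'v::real_normed_vector) \<times> (nat \<Rightarrow> 'a \<Rightarrow> 'w::real_normed_vector)
     \<Rightarrow> ((nat \<Rightarrow> 'a \<Rightarrow> 'v) \<times> (nat \<Rightarrow> 'a \<Rightarrow> 'w)) set \<Rightarrow> real" where
  "distX M N p S = Inf ((\<lambda>q. nX M N (fst p - fst q) + nU M N (snd p - snd q)) ` S)"

definition closedU :: "'a measure \<Rightarrow> (nat \<Rightarrow> 'a \<Rightarrow> real^'d) \<Rightarrow> nat \<Rightarrow> (nat \<Rightarrow> 'a \<Rightarrow> 'v::euclidean_space) set \<Rightarrow> bool" where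
  "closedU M w N V \<longleftrightarrow> (\<forall>us u. (\<forall>j. us j \<in> V) \<and> u \<in> prodU M w N \<and> (\<lambda>j. nU M N (us j - u)) \<longlonglongrightarrow> 0 \<longrightarrow> u \<in> V)"

text \<open>The constraint map g.  sig k x u i is the i-th column sigma^i(k,x,u).\<close>
definition gmap :: "(nat \<Rightarrow> 'a \<Rightarrow> real^'d) \<Rightarrow> real^'n
     \<Rightarrow> (nat \<Rightarrow> real^'n \<Rightarrow> real^'m \<Rightarrow> real^'n) \<Rightarrow> (nat \<Rightarrow> real^'n \<Rightarrow> real^'m \<Rightarrow> 'd \<Rightarrow> real^'n)
     \<Rightarrow> (nat \<Rightarrow> 'a \<Rightarrow> real^'n) \<Rightarrow> (nat \<Rightarrow> 'a \<Rightarrow> real^'m) \<Rightarrow> nat \<Rightarrow> 'a \<Rightarrow> real^'n" where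
  "gmap w x0 b sig x u = (\<lambda>k \<omega>. if k = 0 then x0 - x 0 \<omega>
     else b (k - 1) (x (k - 1) \<omega>) (u (k - 1) \<omega>)
          + (\<Sum>i\<in>UNIV. (w k \<omega> $ i) *\<^sub>R sig (k - 1) (x (k - 1) \<omega>) (u (k - 1) \<omega>) i) - x k \<omega>)"

text \<open>Its Gateaux derivative Dg(x,u)(z,v), with bx, bu, sx, su the partial derivatives.\<close>
definition Dg :: "(nat \<Rightarrow> 'a \<Rightarrow> real^'d)
     \<Rightarrow> (nat \<Rightarrow> real^'n \<Rightarrow> real^'m \<Rightarrow> (real^'n) \<Rightarrow>\<^sub>L (real^'n)) \<Rightarrow> (nat \<Rightarrow> real^'n \<Rightarrow> real^'m \<Rightarrow> (real^'m) \<Rightarrow>\<^sub>L (real^'n))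
     \<Rightarrow> (nat \<Rightarrow> real^'n \<Rightarrow> real^'m \<Rightarrow> 'd \<Rightarrow> (real^'n) \<Rightarrow>\<^sub>L (real^'n)) \<Rightarrow> (nat \<Rightarrow> real^'n \<Rightarrow> real^'m \<Rightarrow> 'd \<Rightarrow> (real^'m) \<Rightarrow>\<^sub>L (real^'n))
     \<Rightarrow> (nat \<Rightarrow> 'a \<Rightarrow> real^'n) \<Rightarrow> (nat \<Rightarrow> 'a \<Rightarrow> real^'m)
     \<Rightarrow> (nat \<Rightarrow> 'a \<Rightarrow> real^'n) \<Rightarrow> (nat \<Rightarrow> 'a \<Rightarrow> real^'m) \<Rightarrow> nat \<Rightarrow> 'a \<Rightarrow> real^'n" where
  "Dg w bx bu sx su x u z v = (\<lambda>k \<omega>. if k = 0 then - z 0 \<omega>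
     else blinfun_apply (bx (k - 1) (x (k - 1) \<omega>) (u (k - 1) \<omega>)) (z (k - 1) \<omega>)
          + blinfun_apply (bu (k - 1) (x (k - 1) \<omega>) (u (k - 1) \<omega>)) (v (k - 1) \<omega>)
          + (\<Sum>i\<in>UNIV. (w k \<omega> $ i) *\<^sub>R
               (blinfun_apply (sx (k - 1) (x (k - 1) \<omega>) (u (k - 1) \<omega>) i) (z (k - 1) \<omega>)
                + blinfun_apply (su (k - 1) (x (k - 1) \<omega>) (u (k - 1) \<omega>) i) (v (k - 1) \<omega>)))
          - z k \<omega>)"

end

theory Submission
  imports Defs
begin

lemma filt_space[simp]: "space (filt M w k) = space M"
  unfolding filt_def by (simp add: space_measure_of_conv)

lemma filt_sets: "sets (filt M w k) = sigma_sets (space M) (\<Union>j\<in>{1..k}. {w j -` A \<inter> space M | A. A \<in> sets borel})"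
  unfolding filt_def by (rule sets_measure_of) auto

lemma filt_sub:
  assumes "\<And>j. j \<in> {1..k} \<Longrightarrow> w j \<in> borel_measurable M"
  shows "subalgebra M (filt M w k)"
  unfolding subalgebra_def filt_sets
proof (intro conjI)
  show "sigma_sets (space M) (\<Union>j\<in>{1..k}. {w j -` A \<inter> space M |A. A \<in> sets borel}) \<subseteq> sets M"
    by (rule sets.sigma_sets_subset) (use assms in auto)
qed simp

lemma filt_mono:
  assumes "j \<le> k" shows "subalgebra (filt M w k) (filt M w j)"
  unfolding subalgebra_def filt_sets
proof (intro conjI)
  show "sigma_sets (space M) (\<Union>i\<in>{1..j}. {w i -` A \<inter> space M |A. A \<in> sets borel})
    \<subseteq> sigma_sets (space M) (\<Union>i\<in>{1..k}. {w i -` A \<inter> space M |A. A \<in> sets borel})"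
    by (rule sigma_sets_mono') (use assms in \<open>fastforce\<close>)
qed simp

lemma w_filt: fixes w :: "nat \<Rightarrow> 'a \<Rightarrow> real^'d" assumes "1 \<le> k" shows "w k \<in> borel_measurable (filt M w k)"
proof (rule measurableI)
  fix A :: "(real^'d) set" assume "A \<in> sets borel"
  then show "w k -` A \<inter> space (filt M w k) \<in> sets (filt M w k)"
    unfolding filt_sets filt_space using assms
    by (intro sigma_sets.Basic UN_I[of k]) auto
qed simp

lemma rec_bound:
  fixes q s :: "nat \<Rightarrow> real" and K :: real
  assumes K: "1 \<le> K" and q0: "q 0 \<le> s 0"
    and qs: "\<And>k. 1 \<le> k \<Longrightarrow> k \<le> N \<Longrightarrow> q k \<le> K * (q (k-1) + s k)"
    and nq: "\<And>k. 0 \<le> q k" and ns: "\<And>k. 0 \<le> s k"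
  shows "(\<Sum>k\<le>N. sqrt (q k)) \<le> (real N + 1) * sqrt K ^ N * (\<Sum>k\<le>N. sqrt (s k))"
proof -
  have sK: "1 \<le> sqrt K" using K by simp
  have claim: "k \<le> N \<Longrightarrow> sqrt (q k) \<le> sqrt K ^ k * (\<Sum>j\<le>k. sqrt (s j))" for k
  proof (induction k)
    case 0 then show ?case using q0 by simp
  next
    case (Suc k)
    have IH: "sqrt (q k) \<le> sqrt K ^ k * (\<Sum>j\<le>k. sqrt (s j))" using Suc by simp
    have p1: "1 \<le> sqrt K ^ k" using sK by simp
    have "sqrt (q (Suc k)) \<le> sqrt (K * (q k + s (Suc k)))"
      using qs[of "Suc k"] Suc.prems by simp
    also have "\<dots> = sqrt K * sqrt (q k + s (Suc k))" by (simp add: real_sqrt_mult)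
    also have "\<dots> \<le> sqrt K * (sqrt (q k) + sqrt (s (Suc k)))"
      using sK by (intro mult_left_mono sqrt_add_le_add_sqrt nq ns) auto
    also have "\<dots> \<le> sqrt K * (sqrt K ^ k * (\<Sum>j\<le>k. sqrt (s j)) + sqrt K ^ k * sqrt (s (Suc k)))"
    proof -
      have "sqrt (s (Suc k)) \<le> sqrt K ^ k * sqrt (s (Suc k))"
        using mult_right_mono[OF p1, of "sqrt (s (Suc k))"] ns by simp
      then show ?thesis using IH sK by (intro mult_left_mono add_mono) auto
    qed
    also have "\<dots> = sqrt K ^ Suc k * (\<Sum>j\<le>Suc k. sqrt (s j))"
      by (simp add: algebra_simps)
    finally show ?case .
  qed
  have "(\<Sum>k\<le>N. sqrt (q k)) \<le> (\<Sum>k\<le>N. sqrt K ^ N * (\<Sum>j\<le>N. sqrt (s j)))"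
  proof (rule sum_mono)
    fix k assume k: "k \<in> {..N}"
    have "sqrt (q k) \<le> sqrt K ^ k * (\<Sum>j\<le>k. sqrt (s j))" using claim k by simp
    also have "\<dots> \<le> sqrt K ^ N * (\<Sum>j\<le>N. sqrt (s j))"
    proof (rule mult_mono)
      show "sqrt K ^ k \<le> sqrt K ^ N" using k sK by (intro power_increasing) auto
      show "(\<Sum>j\<le>k. sqrt (s j)) \<le> (\<Sum>j\<le>N. sqrt (s j))"
        using k ns by (intro sum_mono2) auto
    qed (use sK ns in \<open>auto intro: sum_nonneg\<close>)
    finally show "sqrt (q k) \<le> sqrt K ^ N * (\<Sum>j\<le>N. sqrt (s j))" .
  qed
  also have "\<dots> = (real N + 1) * sqrt K ^ N * (\<Sum>k\<le>N. sqrt (s k))" by simp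
  finally show ?thesis .
qed

lemma cont_meas2:
  fixes h :: "'x::euclidean_space \<Rightarrow> 'y::euclidean_space \<Rightarrow> 'z::euclidean_space"
  assumes h: "continuous_on UNIV (\<lambda>(x, u). h x u)" and f: "f \<in> borel_measurable F" and g: "g \<in> borel_measurable F"
  shows "(\<lambda>\<omega>. h (f \<omega>) (g \<omega>)) \<in> borel_measurable F"
proof -
  have "(\<lambda>(x, u). h x u) \<in> borel_measurable borel" by (rule borel_measurable_continuous_onI[OF h])
  from measurable_compose[OF borel_measurable_Pair[OF f g] this] show ?thesis by simp
qed

lemma cont_meas3:
  fixes L :: "'x::euclidean_space \<Rightarrow> 'y::euclidean_space \<Rightarrow> 'p::euclidean_space \<Rightarrow>\<^sub>L 'q::euclidean_space"
  assumes h: "continuous_on UNIV (\<lambda>(x, u). L x u)" and f: "f \<in> borel_measurable F" and g: "g \<in> borel_measurable F"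
    and z: "z \<in> borel_measurable F"
  shows "(\<lambda>\<omega>. blinfun_apply (L (f \<omega>) (g \<omega>)) (z \<omega>)) \<in> borel_measurable F"
proof -
  have c1: "continuous_on UNIV (\<lambda>p::('x \<times> 'y) \<times> 'p. L (fst (fst p)) (snd (fst p)))"
    using continuous_on_compose[OF continuous_on_fst[OF continuous_on_id] h[THEN continuous_on_subset]]
    by (simp add: o_def case_prod_beta)
  have c: "continuous_on UNIV (\<lambda>p::('x \<times> 'y) \<times> 'p. blinfun_apply (L (fst (fst p)) (snd (fst p))) (snd p))"
    by (intro blinfun.continuous_on[OF c1] continuous_intros)
  have "(\<lambda>p::('x \<times> 'y) \<times> 'p. blinfun_apply (L (fst (fst p)) (snd (fst p))) (snd p)) \<in> borel_measurable borel"
    by (rule borel_measurable_continuous_onI[OF c])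
  from measurable_compose[OF borel_measurable_Pair[OF borel_measurable_Pair[OF f g] z] this] show ?thesis by simp
qed

lemma lip_x:
  fixes f :: "'x::euclidean_space \<Rightarrow> 'y::euclidean_space \<Rightarrow> 'z::euclidean_space"
  assumes d: "\<And>x u. ((\<lambda>(x', u'). f x' u') has_derivative (\<lambda>(z, v). blinfun_apply (fx x u) z + blinfun_apply (fu x u) v)) (at (x, u))"
    and B: "\<And>x u. norm (fx x u) \<le> C"
  shows "norm (f a u - f b u) \<le> C * norm (a - b)"
proof -
  have "((\<lambda>x'. f x' u) has_derivative blinfun_apply (fx x u)) (at x within UNIV)" for x
  proof -
    have p: "((\<lambda>x'. (x', u)) has_derivative (\<lambda>z. (z, 0))) (at x)"
      by (intro derivative_eq_intros) auto
    from has_derivative_compose[OF p d[of x u]] show ?thesis by simp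
  qed
  then have "norm (f a u - f b u) \<le> C * norm (a - b)"
    by (intro differentiable_bound[where S=UNIV and f'="\<lambda>x. blinfun_apply (fx x u)"])
       (auto simp: norm_blinfun.rep_eq[symmetric] B)
  then show ?thesis .
qed

lemma lin_key:
  fixes x1 x2 x3 x4 x5 p q :: real
  shows "x1 \<le> 2*x2 + 2*x3 \<Longrightarrow> x2 \<le> 2*x4 + 2*x5 \<Longrightarrow> x4 \<le> p \<Longrightarrow> x5 \<le> q
       \<Longrightarrow> x1 \<le> 2 * (2 * p + 2 * q) + 2 * x3" by argo

lemma lin_key2:
  fixes E D C K :: real
  assumes a: "E \<ge> 0" "D \<ge> 0" "0 \<le> C" "0 \<le> K"
  shows "2*(2*(C*E) + 2*(K*E)) + 2*D \<le> 4*(C + K + 1)*(E + D)"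
proof -
  have "0 \<le> C * D" "0 \<le> K*D" using a by auto
  moreover have "4*(C + K + 1)*(E + D) = 4*(C*E) + 4*(K*E) + 4*E + 4*(C*D) + 4*(K*D) + 4*D" by (simp add: algebra_simps)
  ultimately show ?thesis using a by argo
qed

lemma sumsq:
  fixes a :: "'d::finite \<Rightarrow> real" and v :: "'d \<Rightarrow> 'v::real_normed_vector"
  shows "(norm (\<Sum>i\<in>UNIV. a i *\<^sub>R v i))\<^sup>2 \<le> real CARD('d) * (\<Sum>i\<in>UNIV. (a i)\<^sup>2 * (norm (v i))\<^sup>2)"
proof -
  have "norm (\<Sum>i\<in>UNIV. a i *\<^sub>R v i) \<le> (\<Sum>i\<in>UNIV. \<bar>a i\<bar> * norm (v i))"
    by (rule order_trans[OF norm_sum]) simp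
  then have "(norm (\<Sum>i\<in>UNIV. a i *\<^sub>R v i))\<^sup>2 \<le> (\<Sum>i\<in>UNIV. \<bar>a i\<bar> * norm (v i))\<^sup>2"
    by (rule power_mono) simp
  also have "\<dots> \<le> (\<Sum>i\<in>UNIV. (\<bar>a i\<bar> * norm (v i))\<^sup>2) * card (UNIV :: 'd set)"
    by (rule sum_squared_le_sum_of_squares)
  also have "\<dots> = real CARD('d) * (\<Sum>i\<in>UNIV. (a i)\<^sup>2 * (norm (v i))\<^sup>2)"
    by (simp add: power_mult_distrib)
  finally show ?thesis .
qed

locale wset = prob_space +
  fixes w :: "nat \<Rightarrow> 'a \<Rightarrow> real^'d" and N :: nat
  assumes wm: "\<And>k. k \<in> {1..N} \<Longrightarrow> w k \<in> borel_measurable M"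
    and wind: "indep_vars (\<lambda>_. borel) w {1..N}"
    and wvar: "\<And>k i. k \<in> {1..N} \<Longrightarrow> integrable M (\<lambda>\<omega>. \<bar>w k \<omega> $ i\<bar>\<^sup>2) \<and> (\<integral>\<omega>. \<bar>w k \<omega> $ i\<bar>\<^sup>2 \<partial>M) = 1"
begin

lemma subF: "k \<le> N \<Longrightarrow> subalgebra M (filt M w k)"
  by (rule filt_sub) (auto intro: wm)

lemma measF: "k \<le> N \<Longrightarrow> f \<in> borel_measurable (filt M w k) \<Longrightarrow> f \<in> borel_measurable M"
  using measurable_from_subalg subF by blast

lemma monoF: "j \<le> k \<Longrightarrow> f \<in> borel_measurable (filt M w j) \<Longrightarrow> f \<in> borel_measurable (filt M w k)"
  using measurable_from_subalg filt_mono by blast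

lemma indep_filt:
  assumes k: "k \<in> {1..N}"
  shows "indep_set (sigma_sets (space M) {w k -` A \<inter> space M | A. A \<in> sets borel}) (sets (filt M w (k-1)))"
proof -
  let ?G = "\<lambda>j. {w j -` A \<inter> space M | A. A \<in> sets (borel :: (real^'d) measure)}"
  let ?I = "case_bool {k} {1..k-1}"
  have "indep_sets (\<lambda>j. sigma_sets (space M) (\<Union>i\<in>?I j. ?G i)) UNIV"
  proof (rule indep_sets_collect_sigma)
    show "indep_sets ?G (\<Union>j\<in>UNIV. ?I j)"
    proof (rule indep_sets_mono_index)
      show "indep_sets ?G {1..N}" using wind unfolding indep_vars_def2 by auto
      show "(\<Union>j\<in>UNIV. ?I j) \<subseteq> {1..N}" using k by (auto simp: UNIV_bool)
    qed
    show "Int_stable (?G i)" for i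
      apply (auto simp: Int_stable_def)
      apply (rule_tac x="A \<inter> Aa" in exI)
      apply auto done
    show "disjoint_family_on ?I UNIV" by (auto simp: disjoint_family_on_def UNIV_bool)
  qed
  moreover have "(\<lambda>j. sigma_sets (space M) (\<Union>i\<in>?I j. ?G i)) = case_bool (sigma_sets (space M) (?G k)) (sets (filt M w (k-1)))"
    by (auto simp: fun_eq_iff filt_sets split: bool.split)
  ultimately show ?thesis unfolding indep_set_def by simp
qed

lemma indep_filt_var:
  fixes f :: "real^'d \<Rightarrow> real" and Y :: "'a \<Rightarrow> real"
  assumes k: "k \<in> {1..N}" and f: "f \<in> borel_measurable borel" and Y: "Y \<in> borel_measurable (filt M w (k-1))"
  shows "indep_var borel (\<lambda>\<omega>. f (w k \<omega>)) borel Y"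
  unfolding indep_var_eq
proof (intro conjI)
  show "random_variable borel (\<lambda>\<omega>. f (w k \<omega>))" using wm[OF k] f by measurable
  show "random_variable borel Y" using measF[OF _ Y] k by auto
  have s1: "sigma_sets (space M) {(\<lambda>\<omega>. f (w k \<omega>)) -` A \<inter> space M |A. A \<in> sets borel}
     \<subseteq> sigma_sets (space M) {w k -` A \<inter> space M | A. A \<in> sets borel}"
  proof (rule sigma_sets_mono', safe)
    fix A :: "real set" assume A: "A \<in> sets borel"
    then have "f -` A \<in> sets borel" using measurable_sets[OF f A] by simp
    then show "\<exists>B. (\<lambda>\<omega>. f (w k \<omega>)) -` A \<inter> space M = w k -` B \<inter> space M \<and> B \<in> sets borel"
      by (intro exI[of _ "f -` A"]) auto
  qed
  have s2: "sigma_sets (space M) {Y -` A \<inter> space M |A. A \<in> sets borel} \<subseteq> sets (filt M w (k-1))"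
    using sigma_sets_le_sets_iff[of "filt M w (k-1)"] measurable_sets[OF Y] by auto
  show "indep_set (sigma_sets (space M) {(\<lambda>\<omega>. f (w k \<omega>)) -` A \<inter> space M |A. A \<in> sets borel})
     (sigma_sets (space M) {Y -` A \<inter> space M |A. A \<in> sets borel})"
    using indep_filt[OF k] unfolding indep_set_def
    by (rule indep_sets_mono_sets) (use s1 s2 in \<open>auto split: bool.split\<close>)
qed

lemma w2_int:
  fixes Y :: "'a \<Rightarrow> real"
  assumes k: "k \<in> {1..N}" and Y: "Y \<in> borel_measurable (filt M w (k-1))" "integrable M Y"
  shows "integrable M (\<lambda>\<omega>. (w k \<omega> $ i)\<^sup>2 * Y \<omega>)" "(\<integral>\<omega>. (w k \<omega> $ i)\<^sup>2 * Y \<omega> \<partial>M) = (\<integral>\<omega>. Y \<omega> \<partial>M)"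
proof -
  have f: "(\<lambda>v::real^'d. (v $ i)\<^sup>2) \<in> borel_measurable borel"
    by (intro borel_measurable_continuous_onI continuous_intros)
  have iv: "indep_var borel (\<lambda>\<omega>. (w k \<omega> $ i)\<^sup>2) borel Y"
    using indep_filt_var[OF k f Y(1)] by simp
  have i1: "integrable M (\<lambda>\<omega>. (w k \<omega> $ i)\<^sup>2)" "(\<integral>\<omega>. (w k \<omega> $ i)\<^sup>2 \<partial>M) = 1"
    using wvar[OF k, of i] by auto
  show "integrable M (\<lambda>\<omega>. (w k \<omega> $ i)\<^sup>2 * Y \<omega>)"
    by (rule indep_var_integrable[OF iv i1(1) Y(2)])
  show "(\<integral>\<omega>. (w k \<omega> $ i)\<^sup>2 * Y \<omega> \<partial>M) = (\<integral>\<omega>. Y \<omega> \<partial>M)"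
    using indep_var_lebesgue_integral[OF iv i1(1) Y(2)] i1(2) by simp
qed

lemma sq_add:
  fixes f g :: "'a \<Rightarrow> 'v::euclidean_space"
  assumes "f \<in> borel_measurable M" "g \<in> borel_measurable M"
    "integrable M (\<lambda>\<omega>. (norm (f \<omega>))\<^sup>2)" "integrable M (\<lambda>\<omega>. (norm (g \<omega>))\<^sup>2)"
  shows "integrable M (\<lambda>\<omega>. (norm (f \<omega> + g \<omega>))\<^sup>2)"
    "(\<integral>\<omega>. (norm (f \<omega> + g \<omega>))\<^sup>2 \<partial>M) \<le> 2 * (\<integral>\<omega>. (norm (f \<omega>))\<^sup>2 \<partial>M) + 2 * (\<integral>\<omega>. (norm (g \<omega>))\<^sup>2 \<partial>M)"
proof -
  have pw: "(norm (f \<omega> + g \<omega>))\<^sup>2 \<le> 2 * (norm (f \<omega>))\<^sup>2 + 2 * (norm (g \<omega>))\<^sup>2" for \<omega>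
  proof -
    have "norm (f \<omega> + g \<omega>) \<le> norm (f \<omega>) + norm (g \<omega>)" by (rule norm_triangle_ineq)
    then have "(norm (f \<omega> + g \<omega>))\<^sup>2 \<le> (norm (f \<omega>) + norm (g \<omega>))\<^sup>2"
      by (rule power_mono) simp
    also have "\<dots> \<le> 2 * (norm (f \<omega>))\<^sup>2 + 2 * (norm (g \<omega>))\<^sup>2"
      using power2_diff[of "norm (f \<omega>)" "norm (g \<omega>)"] zero_le_power2[of "norm (f \<omega>) - norm (g \<omega>)"]
        power2_sum[of "norm (f \<omega>)" "norm (g \<omega>)"] by linarith
    finally show ?thesis .
  qed
  have ih: "integrable M (\<lambda>\<omega>. 2 * (norm (f \<omega>))\<^sup>2 + 2 * (norm (g \<omega>))\<^sup>2)"
    using assms by auto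
  show i: "integrable M (\<lambda>\<omega>. (norm (f \<omega> + g \<omega>))\<^sup>2)"
    by (rule Bochner_Integration.integrable_bound[OF ih]) (use assms pw in auto)
  have "(\<integral>\<omega>. (norm (f \<omega> + g \<omega>))\<^sup>2 \<partial>M) \<le> (\<integral>\<omega>. 2 * (norm (f \<omega>))\<^sup>2 + 2 * (norm (g \<omega>))\<^sup>2 \<partial>M)"
    by (rule integral_mono[OF i ih pw])
  also have "\<dots> = 2 * (\<integral>\<omega>. (norm (f \<omega>))\<^sup>2 \<partial>M) + 2 * (\<integral>\<omega>. (norm (g \<omega>))\<^sup>2 \<partial>M)"
    using assms by simp
  finally show "(\<integral>\<omega>. (norm (f \<omega> + g \<omega>))\<^sup>2 \<partial>M) \<le> 2 * (\<integral>\<omega>. (norm (f \<omega>))\<^sup>2 \<partial>M) + 2 * (\<integral>\<omega>. (norm (g \<omega>))\<^sup>2 \<partial>M)" .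
qed


lemma step:
  fixes e' A D :: "'a \<Rightarrow> 'v::euclidean_space" and B :: "'d \<Rightarrow> 'a \<Rightarrow> 'v"
  assumes k: "k \<in> {1..N}" and c: "0 \<le> c"
   and e': "e' \<in> borel_measurable (filt M w (k-1))" "integrable M (\<lambda>\<omega>. (norm (e' \<omega>))\<^sup>2)"
   and A: "A \<in> borel_measurable M" "\<And>\<omega>. \<omega> \<in> space M \<Longrightarrow> norm (A \<omega>) \<le> c * norm (e' \<omega>)"
   and B: "\<And>i. B i \<in> borel_measurable M" "\<And>i \<omega>. \<omega> \<in> space M \<Longrightarrow> norm (B i \<omega>) \<le> c * norm (e' \<omega>)"
   and D: "D \<in> borel_measurable M" "integrable M (\<lambda>\<omega>. (norm (D \<omega>))\<^sup>2)"
  shows "integrable M (\<lambda>\<omega>. (norm (A \<omega> + (\<Sum>i\<in>UNIV. w k \<omega> $ i *\<^sub>R B i \<omega>) + D \<omega>))\<^sup>2)"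
        "(\<integral>\<omega>. (norm (A \<omega> + (\<Sum>i\<in>UNIV. w k \<omega> $ i *\<^sub>R B i \<omega>) + D \<omega>))\<^sup>2 \<partial>M)
           \<le> 4 * (c\<^sup>2 + (real CARD('d))\<^sup>2 * c\<^sup>2 + 1) * ((\<integral>\<omega>. (norm (e' \<omega>))\<^sup>2 \<partial>M) + (\<integral>\<omega>. (norm (D \<omega>))\<^sup>2 \<partial>M))"
proof -
  let ?d = "real CARD('d)"
  let ?E = "\<integral>\<omega>. (norm (e' \<omega>))\<^sup>2 \<partial>M"
  let ?S = "\<lambda>\<omega>. \<Sum>i\<in>UNIV. w k \<omega> $ i *\<^sub>R B i \<omega>"
  have e'M: "e' \<in> borel_measurable M" using measF[OF _ e'(1)] k by auto
  have wk: "w k \<in> borel_measurable M" using wm[OF k] .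
  have SM: "?S \<in> borel_measurable M"
  proof -
    have "(\<lambda>v::real^'d. v $ i) \<in> borel_measurable borel" for i
      by (intro borel_measurable_continuous_onI continuous_intros)
    then have "(\<lambda>x. w k x $ i) \<in> borel_measurable M" for i
      using measurable_compose[OF wk] by blast
    then show ?thesis using B(1) by (intro borel_measurable_sum borel_measurable_scaleR) auto
  qed
  have pwA: "(norm (A \<omega>))\<^sup>2 \<le> c\<^sup>2 * (norm (e' \<omega>))\<^sup>2" if "\<omega> \<in> space M" for \<omega>
    using power_mono[OF A(2)[OF that] norm_ge_zero, of 2] by (simp add: power_mult_distrib)
  have iA: "integrable M (\<lambda>\<omega>. (norm (A \<omega>))\<^sup>2)"
    by (rule Bochner_Integration.integrable_bound[of _ "\<lambda>\<omega>. c\<^sup>2 * (norm (e' \<omega>))\<^sup>2"])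
       (use e' A pwA in auto)
  have IA: "(\<integral>\<omega>. (norm (A \<omega>))\<^sup>2 \<partial>M) \<le> c\<^sup>2 * ?E"
  proof -
    have "integrable M (\<lambda>\<omega>. c\<^sup>2 * (norm (e' \<omega>))\<^sup>2)" using e' by auto
    from integral_mono[OF iA this pwA] show ?thesis by simp
  qed
  have Y: "(\<lambda>\<omega>. (norm (e' \<omega>))\<^sup>2) \<in> borel_measurable (filt M w (k-1))" using e'(1) by measurable
  note wi = w2_int[OF k Y e'(2)]
  let ?h = "\<lambda>\<omega>. ?d * c\<^sup>2 * (\<Sum>i\<in>UNIV. (w k \<omega> $ i)\<^sup>2 * (norm (e' \<omega>))\<^sup>2)"
  have ih: "integrable M ?h" using wi by auto
  have Ih: "(\<integral>\<omega>. ?h \<omega> \<partial>M) = ?d * c\<^sup>2 * (?d * ?E)"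
    using wi by (simp add: integral_sum)
  have pwS: "(norm (?S \<omega>))\<^sup>2 \<le> ?h \<omega>" if "\<omega> \<in> space M" for \<omega>
  proof -
    have "(norm (?S \<omega>))\<^sup>2 \<le> ?d * (\<Sum>i\<in>UNIV. (w k \<omega> $ i)\<^sup>2 * (norm (B i \<omega>))\<^sup>2)"
      by (rule sumsq)
    also have "\<dots> \<le> ?d * (\<Sum>i\<in>UNIV. (w k \<omega> $ i)\<^sup>2 * (c\<^sup>2 * (norm (e' \<omega>))\<^sup>2))"
    proof -
      have "(w k \<omega> $ i)\<^sup>2 * (norm (B i \<omega>))\<^sup>2 \<le> (w k \<omega> $ i)\<^sup>2 * (c\<^sup>2 * (norm (e' \<omega>))\<^sup>2)" for i
      proof -
        have "(norm (B i \<omega>))\<^sup>2 \<le> c\<^sup>2 * (norm (e' \<omega>))\<^sup>2"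
          using power_mono[OF B(2)[OF that] norm_ge_zero, where n=2] by (simp add: power_mult_distrib)
        then show ?thesis by (rule mult_left_mono) simp
      qed
      then have "(\<Sum>i\<in>UNIV. (w k \<omega> $ i)\<^sup>2 * (norm (B i \<omega>))\<^sup>2) \<le> (\<Sum>i\<in>UNIV. (w k \<omega> $ i)\<^sup>2 * (c\<^sup>2 * (norm (e' \<omega>))\<^sup>2))"
        by (intro sum_mono)
      then show ?thesis by (rule mult_left_mono) simp
    qed
    also have "\<dots> = ?h \<omega>" by (simp add: sum_distrib_left mult.assoc mult.left_commute)
    finally show ?thesis .
  qed
  have iS: "integrable M (\<lambda>\<omega>. (norm (?S \<omega>))\<^sup>2)"
    by (rule Bochner_Integration.integrable_bound[OF ih]) (use SM pwS in \<open>auto intro!: AE_I2 intro: order_trans[OF _ abs_ge_self]\<close>)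
  have IS: "(\<integral>\<omega>. (norm (?S \<omega>))\<^sup>2 \<partial>M) \<le> ?d\<^sup>2 * c\<^sup>2 * ?E"
  proof -
    have "(\<integral>\<omega>. (norm (?S \<omega>))\<^sup>2 \<partial>M) \<le> (\<integral>\<omega>. ?h \<omega> \<partial>M)" by (rule integral_mono[OF iS ih pwS])
    also have "\<dots> = ?d * c\<^sup>2 * (?d * ?E)" by (rule Ih)
    also have "\<dots> = ?d\<^sup>2 * c\<^sup>2 * ?E" by (simp add: power2_eq_square)
    finally show ?thesis .
  qed
  note AS = sq_add[OF A(1) SM iA iS]
  have ASM: "(\<lambda>\<omega>. A \<omega> + ?S \<omega>) \<in> borel_measurable M" using A(1) SM by auto
  note ASD = sq_add[OF ASM D(1) AS(1) D(2)]
  show "integrable M (\<lambda>\<omega>. (norm (A \<omega> + ?S \<omega> + D \<omega>))\<^sup>2)" by (rule ASD(1))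
  have E0: "0 \<le> ?E" by (rule integral_nonneg_AE) auto
  have D0: "0 \<le> (\<integral>\<omega>. (norm (D \<omega>))\<^sup>2 \<partial>M)" by (rule integral_nonneg_AE) auto
  have c2: "0 \<le> c\<^sup>2" by simp
  have "(\<integral>\<omega>. (norm (A \<omega> + ?S \<omega> + D \<omega>))\<^sup>2 \<partial>M) \<le> 2 * (2 * (c\<^sup>2 * ?E) + 2 * (?d\<^sup>2 * c\<^sup>2 * ?E)) + 2 * (\<integral>\<omega>. (norm (D \<omega>))\<^sup>2 \<partial>M)"
  proof -
    show ?thesis by (rule lin_key[OF ASD(2) AS(2) IA IS])
  qed
  also have "\<dots> \<le> 4 * (c\<^sup>2 + ?d\<^sup>2 * c\<^sup>2 + 1) * (?E + (\<integral>\<omega>. (norm (D \<omega>))\<^sup>2 \<partial>M))"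
    by (rule lin_key2[OF E0 D0]) simp_all
  finally show "(\<integral>\<omega>. (norm (A \<omega> + ?S \<omega> + D \<omega>))\<^sup>2 \<partial>M) \<le> 4 * (c\<^sup>2 + ?d\<^sup>2 * c\<^sup>2 + 1) * (?E + (\<integral>\<omega>. (norm (D \<omega>))\<^sup>2 \<partial>M))" .
qed

lemma sqi_bound:
  fixes f :: "'a \<Rightarrow> 'v::euclidean_space" and g :: "'a \<Rightarrow> 'u::euclidean_space"
  assumes g: "g \<in> borel_measurable M" and f: "integrable M (\<lambda>\<omega>. (norm (f \<omega>))\<^sup>2)"
    and b: "\<And>\<omega>. \<omega> \<in> space M \<Longrightarrow> norm (g \<omega>) \<le> C * norm (f \<omega>)"
  shows "integrable M (\<lambda>\<omega>. (norm (g \<omega>))\<^sup>2)"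
proof -
  have pw: "(norm (g \<omega>))\<^sup>2 \<le> C\<^sup>2 * (norm (f \<omega>))\<^sup>2" if "\<omega> \<in> space M" for \<omega>
    using power_mono[OF b[OF that] norm_ge_zero, of 2] by (simp add: power_mult_distrib)
  show ?thesis
    by (rule Bochner_Integration.integrable_bound[of _ "\<lambda>\<omega>. C\<^sup>2 * (norm (f \<omega>))\<^sup>2"])
       (use f g pw in \<open>auto intro!: AE_I2\<close>)
qed

lemma sqi_growth:
  fixes f :: "'a \<Rightarrow> 'v::euclidean_space" and g :: "'a \<Rightarrow> 'u::euclidean_space" and h :: "'a \<Rightarrow> 'z::euclidean_space"
  assumes h: "h \<in> borel_measurable M" and f: "integrable M (\<lambda>\<omega>. (norm (f \<omega>))\<^sup>2)"
    and g: "integrable M (\<lambda>\<omega>. (norm (g \<omega>))\<^sup>2)"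
    and b: "\<And>\<omega>. \<omega> \<in> space M \<Longrightarrow> norm (h \<omega>) \<le> C * (1 + norm (f \<omega>) + norm (g \<omega>))"
  shows "integrable M (\<lambda>\<omega>. (norm (h \<omega>))\<^sup>2)"
proof -
  have pw: "(norm (h \<omega>))\<^sup>2 \<le> 3 * C\<^sup>2 * (1 + (norm (f \<omega>))\<^sup>2 + (norm (g \<omega>))\<^sup>2)" if "\<omega> \<in> space M" for \<omega>
  proof -
    let ?a = "norm (f \<omega>)" and ?b = "norm (g \<omega>)"
    have "(norm (h \<omega>))\<^sup>2 \<le> (C * (1 + ?a + ?b))\<^sup>2"
      by (rule power_mono[OF b[OF that] norm_ge_zero])
    also have "\<dots> = C\<^sup>2 * (1 + ?a + ?b)\<^sup>2" by (simp add: power_mult_distrib)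
    also have "\<dots> \<le> C\<^sup>2 * (3 * (1 + ?a\<^sup>2 + ?b\<^sup>2))"
    proof (rule mult_left_mono)
      have e: "(1 + ?a + ?b)\<^sup>2 = 1 + ?a\<^sup>2 + ?b\<^sup>2 + 2 * ?a + 2 * ?b + 2 * (?a * ?b)"
        by (simp add: power2_eq_square algebra_simps)
      have "0 \<le> (?a - 1)\<^sup>2" "0 \<le> (?b - 1)\<^sup>2" "0 \<le> (?a - ?b)\<^sup>2" by simp_all
      then have "2 * ?a \<le> 1 + ?a\<^sup>2" "2 * ?b \<le> 1 + ?b\<^sup>2" "2 * (?a * ?b) \<le> ?a\<^sup>2 + ?b\<^sup>2"
        by (simp_all add: power2_diff)
      then show "(1 + ?a + ?b)\<^sup>2 \<le> 3 * (1 + ?a\<^sup>2 + ?b\<^sup>2)" using e by argo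
    qed simp
    finally show ?thesis by (simp add: algebra_simps)
  qed
  have "integrable M (\<lambda>\<omega>. 3 * C\<^sup>2 * (1 + (norm (f \<omega>))\<^sup>2 + (norm (g \<omega>))\<^sup>2))"
    using f g by auto
  then show ?thesis
    by (rule Bochner_Integration.integrable_bound) (use h pw in \<open>auto intro!: AE_I2\<close>)
qed

lemma sqi_add:
  fixes f g :: "'a \<Rightarrow> 'v::euclidean_space"
  assumes "f \<in> borel_measurable M" "g \<in> borel_measurable M"
    "integrable M (\<lambda>\<omega>. (norm (f \<omega>))\<^sup>2)" "integrable M (\<lambda>\<omega>. (norm (g \<omega>))\<^sup>2)"
  shows "integrable M (\<lambda>\<omega>. (norm (f \<omega> + g \<omega>))\<^sup>2)"
  by (rule sq_add(1)[OF assms])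

lemma sqi_diff:
  fixes f g :: "'a \<Rightarrow> 'v::euclidean_space"
  assumes "f \<in> borel_measurable M" "g \<in> borel_measurable M"
    "integrable M (\<lambda>\<omega>. (norm (f \<omega>))\<^sup>2)" "integrable M (\<lambda>\<omega>. (norm (g \<omega>))\<^sup>2)"
  shows "integrable M (\<lambda>\<omega>. (norm (f \<omega> - g \<omega>))\<^sup>2)"
  using sq_add(1)[of f "\<lambda>\<omega>. - g \<omega>"] assms by simp

lemma sum_meas:
  fixes a :: "'d \<Rightarrow> 'a \<Rightarrow> 'v::euclidean_space" and F :: "'a measure"
  assumes "w k \<in> borel_measurable F" "\<And>i. a i \<in> borel_measurable F"
  shows "(\<lambda>\<omega>. \<Sum>i\<in>UNIV. w k \<omega> $ i *\<^sub>R a i \<omega>) \<in> borel_measurable F"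
proof -
  have "(\<lambda>v::real^'d. v $ i) \<in> borel_measurable borel" for i
    by (intro borel_measurable_continuous_onI continuous_intros)
  then have "(\<lambda>x. w k x $ i) \<in> borel_measurable F" for i
    using measurable_compose[OF assms(1)] by blast
  then show ?thesis using assms(2) by (intro borel_measurable_sum borel_measurable_scaleR) auto
qed

lemma sqsum:
  fixes a :: "'d \<Rightarrow> 'a \<Rightarrow> 'v::euclidean_space"
  assumes k: "k \<in> {1..N}" and a: "\<And>i. a i \<in> borel_measurable (filt M w (k-1))"
    "\<And>i. integrable M (\<lambda>\<omega>. (norm (a i \<omega>))\<^sup>2)"
  shows "integrable M (\<lambda>\<omega>. (norm (\<Sum>i\<in>UNIV. w k \<omega> $ i *\<^sub>R a i \<omega>))\<^sup>2)"
proof -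
  let ?d = "real CARD('d)"
  let ?S = "\<lambda>\<omega>. \<Sum>i\<in>UNIV. w k \<omega> $ i *\<^sub>R a i \<omega>"
  have aM: "a i \<in> borel_measurable M" for i using measF[OF _ a(1)] k by auto
  have SM: "?S \<in> borel_measurable M" by (rule sum_meas[OF wm[OF k] aM])
  have Y: "(\<lambda>\<omega>. (norm (a i \<omega>))\<^sup>2) \<in> borel_measurable (filt M w (k-1))" for i using a(1) by measurable
  have wi: "integrable M (\<lambda>\<omega>. (w k \<omega> $ i)\<^sup>2 * (norm (a i \<omega>))\<^sup>2)" for i
    by (rule w2_int(1)[OF k Y a(2)])
  let ?h = "\<lambda>\<omega>. ?d * (\<Sum>i\<in>UNIV. (w k \<omega> $ i)\<^sup>2 * (norm (a i \<omega>))\<^sup>2)"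
  have ih: "integrable M ?h" using wi by auto
  have pw: "(norm (?S \<omega>))\<^sup>2 \<le> ?h \<omega>" for \<omega> by (rule sumsq)
  show ?thesis
    by (rule Bochner_Integration.integrable_bound[OF ih]) (use SM pw in \<open>auto intro!: AE_I2 intro: order_trans[OF _ abs_ge_self]\<close>)
qed

lemma L2F_D: "f \<in> L2F M w k \<Longrightarrow> f \<in> borel_measurable (filt M w k) \<and> integrable M (\<lambda>\<omega>. (norm (f \<omega>))\<^sup>2)"
  by (simp add: L2F_def)

lemma Xsp_D:
  fixes f :: "'a \<Rightarrow> 'v::euclidean_space"
  assumes k: "k \<le> N" and f: "f \<in> Xsp M w k"
  shows "f \<in> borel_measurable (filt M w k) \<and> integrable M (\<lambda>\<omega>. (norm (f \<omega>))\<^sup>2)"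
proof (cases "k = 0")
  case True
  then obtain c where "f = (\<lambda>\<omega>. c)" using f by (auto simp: Xsp_def)
  then show ?thesis by simp
next
  case False
  then obtain y0 yi where fe: "f = (\<lambda>\<omega>. y0 \<omega> + (\<Sum>i\<in>UNIV. (w k \<omega> $ i) *\<^sub>R yi i \<omega>))"
    and y0: "y0 \<in> L2F M w (k - 1)" and yi: "\<And>i. yi i \<in> L2F M w (k - 1)"
    using f by (auto simp: Xsp_def)
  have kk: "k \<in> {1..N}" using k False by auto
  have y0F: "y0 \<in> borel_measurable (filt M w k)" using L2F_D[OF y0] monoF[of "k-1" k] by auto
  have yiF: "yi i \<in> borel_measurable (filt M w k)" for i using L2F_D[OF yi] monoF[of "k-1" k] by auto
  have wF: "w k \<in> borel_measurable (filt M w k)" using w_filt kk by auto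
  have SF: "(\<lambda>\<omega>. \<Sum>i\<in>UNIV. w k \<omega> $ i *\<^sub>R yi i \<omega>) \<in> borel_measurable (filt M w k)"
    by (rule sum_meas[OF wF yiF])
  have m: "f \<in> borel_measurable (filt M w k)" unfolding fe using y0F SF by auto
  have y0M: "y0 \<in> borel_measurable M" using measF[OF k y0F] .
  have SM: "(\<lambda>\<omega>. \<Sum>i\<in>UNIV. w k \<omega> $ i *\<^sub>R yi i \<omega>) \<in> borel_measurable M" using measF[OF k SF] .
  have iS: "integrable M (\<lambda>\<omega>. (norm (\<Sum>i\<in>UNIV. w k \<omega> $ i *\<^sub>R yi i \<omega>))\<^sup>2)"
    using sqsum[OF kk, of yi] L2F_D[OF yi] by auto
  have "integrable M (\<lambda>\<omega>. (norm (f \<omega>))\<^sup>2)"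
    unfolding fe by (rule sq_add(1)[OF y0M SM _ iS]) (use L2F_D[OF y0] in auto)
  with m show ?thesis by simp
qed

end



theorem lemma6p3:
  fixes M :: "'a measure" and N :: nat
    and w :: "nat \<Rightarrow> 'a \<Rightarrow> real^'d"
    and x0 :: "real^'n"
    and b :: "nat \<Rightarrow> real^'n \<Rightarrow> real^'m \<Rightarrow> real^'n"
    and sig :: "nat \<Rightarrow> real^'n \<Rightarrow> real^'m \<Rightarrow> 'd \<Rightarrow> real^'n"
    and bx :: "nat \<Rightarrow> real^'n \<Rightarrow> real^'m \<Rightarrow> (real^'n) \<Rightarrow>\<^sub>L (real^'n)"
    and bu :: "nat \<Rightarrow> real^'n \<Rightarrow> real^'m \<Rightarrow> (real^'m) \<Rightarrow>\<^sub>L (real^'n)"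
    and sx :: "nat \<Rightarrow> real^'n \<Rightarrow> real^'m \<Rightarrow> 'd \<Rightarrow> (real^'n) \<Rightarrow>\<^sub>L (real^'n)"
    and su :: "nat \<Rightarrow> real^'n \<Rightarrow> real^'m \<Rightarrow> 'd \<Rightarrow> (real^'m) \<Rightarrow>\<^sub>L (real^'n)"
    and c1 :: real
  assumes P: "prob_space M"
    and w_meas: "\<And>k. k \<in> {1..N} \<Longrightarrow> w k \<in> borel_measurable M"
    and w_indep: "prob_space.indep_vars M (\<lambda>_. borel) w {1..N}"
    and w_coord_indep: "\<And>k. k \<in> {1..N} \<Longrightarrow> prob_space.indep_vars M (\<lambda>_. borel) (\<lambda>i \<omega>. w k \<omega> $ i) UNIV"
    and w_mean: "\<And>k i. k \<in> {1..N} \<Longrightarrow> integrable M (\<lambda>\<omega>. w k \<omega> $ i) \<and> (\<integral>\<omega>. w k \<omega> $ i \<partial>M) = 0"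
    and w_var: "\<And>k i. k \<in> {1..N} \<Longrightarrow> integrable M (\<lambda>\<omega>. \<bar>w k \<omega> $ i\<bar>\<^sup>2) \<and> (\<integral>\<omega>. \<bar>w k \<omega> $ i\<bar>\<^sup>2 \<partial>M) = 1"
    and b_deriv: "\<And>k x u. k < N \<Longrightarrow>
       ((\<lambda>(x', u'). b k x' u') has_derivative (\<lambda>(z, v). blinfun_apply (bx k x u) z + blinfun_apply (bu k x u) v)) (at (x, u))"
    and sig_deriv: "\<And>k x u i. k < N \<Longrightarrow>
       ((\<lambda>(x', u'). sig k x' u' i) has_derivative (\<lambda>(z, v). blinfun_apply (sx k x u i) z + blinfun_apply (su k x u i) v)) (at (x, u))"
    and b_C1: "\<And>k. k < N \<Longrightarrow> continuous_on UNIV (\<lambda>(x, u). bx k x u) \<and> continuous_on UNIV (\<lambda>(x, u). bu k x u)"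
    and sig_C1: "\<And>k i. k < N \<Longrightarrow> continuous_on UNIV (\<lambda>(x, u). sx k x u i) \<and> continuous_on UNIV (\<lambda>(x, u). su k x u i)"
    and b_growth: "\<And>k x u. k < N \<Longrightarrow> norm (b k x u) \<le> c1 * (1 + norm x + norm u)"
    and sig_growth: "\<And>k x u i. k < N \<Longrightarrow> norm (sig k x u i) \<le> c1 * (1 + norm x + norm u)"
    and b_lip: "\<And>k x u. k < N \<Longrightarrow> norm (bx k x u) + norm (bu k x u) \<le> c1"
    and sig_lip: "\<And>k x u i. k < N \<Longrightarrow> norm (sx k x u i) + norm (su k x u i) \<le> c1"
  shows "\<exists>c>0.
     (\<forall>x \<in> prodX M w N. \<forall>u \<in> prodU M w N. \<forall>\<delta> \<in> prodX M w N.
        \<exists>z \<in> prodX M w N.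
          (\<forall>k\<le>N. AE \<omega> in M. Dg w bx bu sx su x u z (\<lambda>_ _. 0) k \<omega> = \<delta> k \<omega>)
        \<and> (\<forall>z' \<in> prodX M w N.
             (\<forall>k\<le>N. AE \<omega> in M. Dg w bx bu sx su x u z' (\<lambda>_ _. 0) k \<omega> = \<delta> k \<omega>)
             \<longrightarrow> (\<forall>k\<le>N. AE \<omega> in M. z' k \<omega> = z k \<omega>))
        \<and> nX M N z \<le> c * nX M N \<delta>)
   \<and> (\<forall>V. V \<subseteq> prodU M w N \<and> closedU M w N V \<longrightarrow>
        (\<forall>x \<in> prodX M w N. \<forall>y \<in> prodX M w N. \<forall>u \<in> V.
           distX M N (x, u)
             {(x', u'). x' \<in> prodX M w N \<and> u' \<in> V
                \<and> (\<forall>k\<le>N. AE \<omega> in M. gmap w x0 b sig x' u' k \<omega> = y k \<omega>)}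
           \<le> c * nX M N (gmap w x0 b sig x u - y)))"
proof -
  interpret W: wset M w N
    using P w_meas w_indep w_var unfolding wset_def wset_axioms_def by auto
  define c0 where "c0 = max c1 0"
  define d where "d = real CARD('d)"
  define K where "K = 4 * (c0\<^sup>2 + d\<^sup>2 * c0\<^sup>2 + 1)"
  define c where "c = (real N + 1) * sqrt K ^ N"
  have c0: "0 \<le> c0" "c1 \<le> c0" by (auto simp: c0_def)
  have K1: "1 \<le> K" unfolding K_def by (simp add: add_nonneg_nonneg)
  have cpos: "0 < c" unfolding c_def using K1 by simp
  have bxb: "norm (bx k x' u') \<le> c0" if "k < N" for k x' u'
    using b_lip[OF that, where x=x' and u=u'] norm_ge_zero[of "bu k x' u'"] c0 by linarith
  have sxb: "norm (sx k x' u' i) \<le> c0" if "k < N" for k x' u' i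
    using sig_lip[OF that, where x=x' and u=u' and i=i] norm_ge_zero[of "su k x' u' i"] c0 by linarith
  have contb: "continuous_on UNIV (\<lambda>(x', u'). b k x' u')" if "k < N" for k
  proof -
    have "continuous (at p) (\<lambda>(x', u'). b k x' u')" for p
      using has_derivative_continuous[OF b_deriv[OF that, where x="fst p" and u="snd p"]] by simp
    then show ?thesis by (simp add: continuous_at_imp_continuous_on)
  qed
  have contsig: "continuous_on UNIV (\<lambda>(x', u'). sig k x' u' i)" if "k < N" for k i
  proof -
    have "continuous (at p) (\<lambda>(x', u'). sig k x' u' i)" for p
      using has_derivative_continuous[OF sig_deriv[OF that, where x="fst p" and u="snd p" and i=i]] by simp
    then show ?thesis by (simp add: continuous_at_imp_continuous_on)
  qed
  have contbx: "continuous_on UNIV (\<lambda>(x', u'). bx k x' u')" if "k < N" for k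
    using b_C1[OF that] by simp
  have contsx: "continuous_on UNIV (\<lambda>(x', u'). sx k x' u' i)" if "k < N" for k i
    using sig_C1[OF that] by simp
  have growb: "norm (b k x' u') \<le> c0 * (1 + norm x' + norm u')" if "k < N" for k x' u'
    using b_growth[OF that, where x=x' and u=u'] mult_right_mono[OF c0(2), of "1 + norm x' + norm u'"] by simp
  have growsig: "norm (sig k x' u' i) \<le> c0 * (1 + norm x' + norm u')" if "k < N" for k x' u' i
    using sig_growth[OF that, where x=x' and u=u' and i=i] mult_right_mono[OF c0(2), of "1 + norm x' + norm u'"] by simp
  have lipb: "norm (b k a u' - b k a' u') \<le> c0 * norm (a - a')" if "k < N" for k a a' u'
    by (rule lip_x[OF b_deriv[OF that] bxb[OF that]])
  have lipsig: "norm (sig k a u' i - sig k a' u' i) \<le> c0 * norm (a - a')" if "k < N" for k a a' u' i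
    by (rule lip_x[where fx="\<lambda>x u. sx k x u i" and fu="\<lambda>x u. su k x u i", OF sig_deriv[OF that] sxb[OF that]])
  have XD: "f k \<in> borel_measurable (filt M w k) \<and> integrable M (\<lambda>\<omega>. (norm (f k \<omega>))\<^sup>2)"
    if "f \<in> prodX M w N" "k \<le> N" for f :: "nat \<Rightarrow> 'a \<Rightarrow> real^'n" and k
    using W.Xsp_D[OF that(2)] that by (auto simp: prodX_def)
  have UD: "f k \<in> borel_measurable (filt M w k) \<and> integrable M (\<lambda>\<omega>. (norm (f k \<omega>))\<^sup>2)"
    if "f \<in> prodU M w N" "k < N" for f :: "nat \<Rightarrow> 'a \<Rightarrow> real^'m" and k
    using W.L2F_D that by (auto simp: prodU_def)
  have FM: "f \<in> borel_measurable M" if "f \<in> borel_measurable (filt M w k)" "k \<le> N" for f :: "'a \<Rightarrow> 'v::euclidean_space" and k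
    using W.measF that by blast
  show ?thesis
  proof (intro exI[of _ c] conjI cpos ballI allI impI)
    fix x :: "nat \<Rightarrow> 'a \<Rightarrow> real^'n" and u :: "nat \<Rightarrow> 'a \<Rightarrow> real^'m" and \<delta> :: "nat \<Rightarrow> 'a \<Rightarrow> real^'n"
    assume x: "x \<in> prodX M w N" and u: "u \<in> prodU M w N" and \<delta>: "\<delta> \<in> prodX M w N"
    have xF: "x k \<in> borel_measurable (filt M w k)" "integrable M (\<lambda>\<omega>. (norm (x k \<omega>))\<^sup>2)" if "k \<le> N" for k
      using XD[OF x that] by auto
    have uF: "u k \<in> borel_measurable (filt M w k)" "integrable M (\<lambda>\<omega>. (norm (u k \<omega>))\<^sup>2)" if "k < N" for k
      using UD[OF u that] by auto
    define z where "z = rec_nat (\<lambda>\<omega>. - \<delta> 0 \<omega>) (\<lambda>k zk \<omega>. blinfun_apply (bx k (x k \<omega>) (u k \<omega>)) (zk \<omega>)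
        + (\<Sum>i\<in>UNIV. w (Suc k) \<omega> $ i *\<^sub>R blinfun_apply (sx k (x k \<omega>) (u k \<omega>) i) (zk \<omega>)) - \<delta> (Suc k) \<omega>)"
    have z0: "z 0 = (\<lambda>\<omega>. - \<delta> 0 \<omega>)" by (simp add: z_def)
    have zS: "z (Suc k) = (\<lambda>\<omega>. blinfun_apply (bx k (x k \<omega>) (u k \<omega>)) (z k \<omega>)
        + (\<Sum>i\<in>UNIV. w (Suc k) \<omega> $ i *\<^sub>R blinfun_apply (sx k (x k \<omega>) (u k \<omega>) i) (z k \<omega>)) - \<delta> (Suc k) \<omega>)" for k
      by (simp add: z_def)
    have Dgz: "Dg w bx bu sx su x u z (\<lambda>_ _. 0) k \<omega> = \<delta> k \<omega>" for k \<omega>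
      by (cases k) (simp_all add: Dg_def z0 zS)
    have zX: "z k \<in> Xsp M w k" if "k \<le> N" for k
      using that
    proof (induction k)
      case 0
      have "\<delta> 0 \<in> Xsp M w 0" using \<delta> by (auto simp: prodX_def)
      then obtain cc where "\<delta> 0 = (\<lambda>\<omega>. cc)" by (auto simp: Xsp_def)
      then show ?case by (auto simp: z0 Xsp_def)
    next
      case (Suc k)
      have kN: "k < N" "k \<le> N" using Suc.prems by auto
      have zk: "z k \<in> borel_measurable (filt M w k)" "integrable M (\<lambda>\<omega>. (norm (z k \<omega>))\<^sup>2)"
        using W.Xsp_D[OF kN(2) Suc.IH[OF kN(2)]] by auto
      have "\<delta> (Suc k) \<in> Xsp M w (Suc k)" using \<delta> Suc.prems by (auto simp: prodX_def)
      then obtain y0 yi where de: "\<delta> (Suc k) = (\<lambda>\<omega>. y0 \<omega> + (\<Sum>i\<in>UNIV. (w (Suc k) \<omega> $ i) *\<^sub>R yi i \<omega>))"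
        and y0: "y0 \<in> L2F M w k" and yi: "\<And>i. yi i \<in> L2F M w k"
        by (auto simp: Xsp_def)
      let ?A = "\<lambda>\<omega>. blinfun_apply (bx k (x k \<omega>) (u k \<omega>)) (z k \<omega>)"
      let ?B = "\<lambda>i \<omega>. blinfun_apply (sx k (x k \<omega>) (u k \<omega>) i) (z k \<omega>)"
      have AF: "?A \<in> borel_measurable (filt M w k)"
        by (rule cont_meas3[OF contbx[OF kN(1)] xF(1)[OF kN(2)] uF(1)[OF kN(1)] zk(1)])
      have BF: "?B i \<in> borel_measurable (filt M w k)" for i
        by (rule cont_meas3[OF contsx[OF kN(1)] xF(1)[OF kN(2)] uF(1)[OF kN(1)] zk(1)])
      have AI: "integrable M (\<lambda>\<omega>. (norm (?A \<omega>))\<^sup>2)"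
        by (rule W.sqi_bound[where C=c0, OF FM[OF AF kN(2)] zk(2)], rule order_trans[OF norm_blinfun], rule mult_right_mono[OF bxb[OF kN(1)]], simp)
      have BI: "integrable M (\<lambda>\<omega>. (norm (?B i \<omega>))\<^sup>2)" for i
        by (rule W.sqi_bound[where C=c0, OF FM[OF BF kN(2)] zk(2)], rule order_trans[OF norm_blinfun], rule mult_right_mono[OF sxb[OF kN(1)]], simp)
      have y0D: "y0 \<in> borel_measurable (filt M w k)" "integrable M (\<lambda>\<omega>. (norm (y0 \<omega>))\<^sup>2)"
        using W.L2F_D[OF y0] by auto
      have yiD: "yi i \<in> borel_measurable (filt M w k)" "integrable M (\<lambda>\<omega>. (norm (yi i \<omega>))\<^sup>2)" for i
        using W.L2F_D[OF yi] by auto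
      have n0: "(\<lambda>\<omega>. ?A \<omega> - y0 \<omega>) \<in> L2F M w k"
        unfolding L2F_def using AF y0D AI
        by (auto intro!: W.sqi_diff FM[OF _ kN(2)])
      have ni: "(\<lambda>\<omega>. ?B i \<omega> - yi i \<omega>) \<in> L2F M w k" for i
        unfolding L2F_def using BF yiD BI
        by (auto intro!: W.sqi_diff FM[OF _ kN(2)])
      have eqz: "z (Suc k) = (\<lambda>\<omega>. (?A \<omega> - y0 \<omega>) + (\<Sum>i\<in>UNIV. (w (Suc k) \<omega> $ i) *\<^sub>R (?B i \<omega> - yi i \<omega>)))"
        by (simp add: zS de scaleR_diff_right sum_subtractf algebra_simps)
      show ?case unfolding Xsp_def
        by (simp, rule exI[of _ "\<lambda>\<omega>. ?A \<omega> - y0 \<omega>"], rule exI[of _ "\<lambda>i \<omega>. ?B i \<omega> - yi i \<omega>"])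
          (use eqz n0 ni in simp)
    qed
    have zD: "z k \<in> borel_measurable (filt M w k)" "integrable M (\<lambda>\<omega>. (norm (z k \<omega>))\<^sup>2)" if "k \<le> N" for k
      using W.Xsp_D[OF that zX[OF that]] by auto
    have zP: "z \<in> prodX M w N" using zX by (auto simp: prodX_def)
    have uniq: "\<forall>k\<le>N. AE \<omega> in M. z' k \<omega> = z k \<omega>"
      if h: "\<forall>k\<le>N. AE \<omega> in M. Dg w bx bu sx su x u z' (\<lambda>_ _. 0) k \<omega> = \<delta> k \<omega>" for z'
    proof (intro allI impI)
      fix k assume "k \<le> N"
      then show "AE \<omega> in M. z' k \<omega> = z k \<omega>"
      proof (induction k)
        case 0
        from h[rule_format, OF 0] show ?case
          by eventually_elim (simp add: Dg_def z0, metis minus_minus)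
      next
        case (Suc k)
        have IH: "AE \<omega> in M. z' k \<omega> = z k \<omega>" using Suc.IH Suc.prems by simp
        from h[rule_format, OF Suc.prems] IH show ?case
        proof (eventually_elim)
          case (elim \<omega>)
          then show ?case by (simp add: Dg_def zS algebra_simps)
        qed
      qed
    qed
    have bound: "nX M N z \<le> c * nX M N \<delta>"
    proof -
      define q where "q k = (\<integral>\<omega>. (norm (z k \<omega>))\<^sup>2 \<partial>M)" for k
      define s where "s k = (\<integral>\<omega>. (norm (\<delta> k \<omega>))\<^sup>2 \<partial>M)" for k
      have nq: "0 \<le> q k" for k unfolding q_def by (rule integral_nonneg_AE) auto
      have ns: "0 \<le> s k" for k unfolding s_def by (rule integral_nonneg_AE) auto
      have q0: "q 0 \<le> s 0" by (simp add: q_def s_def z0)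
      have qs: "q k \<le> K * (q (k-1) + s k)" if "1 \<le> k" "k \<le> N" for k
      proof -
        define j where "j = k - 1"
        have kj: "k = Suc j" using that(1) by (simp add: j_def)
        have jN: "j < N" "j \<le> N" using that kj by auto
        have kk: "Suc j \<in> {1..N}" using that kj by auto
        let ?A = "\<lambda>\<omega>. blinfun_apply (bx j (x j \<omega>) (u j \<omega>)) (z j \<omega>)"
        let ?B = "\<lambda>i \<omega>. blinfun_apply (sx j (x j \<omega>) (u j \<omega>) i) (z j \<omega>)"
        have AM: "?A \<in> borel_measurable M"
          by (rule FM[OF cont_meas3[OF contbx[OF jN(1)] xF(1)[OF jN(2)] uF(1)[OF jN(1)] zD(1)[OF jN(2)]] jN(2)])
        have BM: "?B i \<in> borel_measurable M" for i
          by (rule FM[OF cont_meas3[OF contsx[OF jN(1)] xF(1)[OF jN(2)] uF(1)[OF jN(1)] zD(1)[OF jN(2)]] jN(2)])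
        have dD: "\<delta> (Suc j) \<in> borel_measurable M" "integrable M (\<lambda>\<omega>. (norm (\<delta> (Suc j) \<omega>))\<^sup>2)"
        proof -
          have sj: "Suc j \<le> N" using that kj by simp
          note h = XD[OF \<delta> sj]
          show "\<delta> (Suc j) \<in> borel_measurable M" by (rule FM[OF conjunct1[OF h] sj])
          show "integrable M (\<lambda>\<omega>. (norm (\<delta> (Suc j) \<omega>))\<^sup>2)" by (rule conjunct2[OF h])
        qed
        have mD: "(\<lambda>\<omega>. - \<delta> (Suc j) \<omega>) \<in> borel_measurable M" "integrable M (\<lambda>\<omega>. (norm (- \<delta> (Suc j) \<omega>))\<^sup>2)"
          using dD by auto
        have ze: "z j \<in> borel_measurable (filt M w (Suc j - 1))" using zD(1)[OF jN(2)] by simp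
        have Ab: "norm (?A \<omega>) \<le> c0 * norm (z j \<omega>)" for \<omega>
          by (rule order_trans[OF norm_blinfun], rule mult_right_mono[OF bxb[OF jN(1)]], simp)
        have Bb: "norm (?B i \<omega>) \<le> c0 * norm (z j \<omega>)" for i \<omega>
          by (rule order_trans[OF norm_blinfun], rule mult_right_mono[OF sxb[OF jN(1)]], simp)
        note st = W.step[where k="Suc j" and c=c0 and e'="z j" and A="?A" and B="?B" and D="\<lambda>\<omega>. - \<delta> (Suc j) \<omega>",
            OF kk c0(1) ze zD(2)[OF jN(2)] AM Ab BM Bb mD]
        have e: "(\<lambda>\<omega>. (norm (?A \<omega> + (\<Sum>i\<in>UNIV. w (Suc j) \<omega> $ i *\<^sub>R ?B i \<omega>) + - \<delta> (Suc j) \<omega>))\<^sup>2)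
           = (\<lambda>\<omega>. (norm (z k \<omega>))\<^sup>2)" by (simp add: kj zS)
        have "q k \<le> 4 * (c0\<^sup>2 + (real CARD('d))\<^sup>2 * c0\<^sup>2 + 1) * (q j + s k)"
          using st(2) unfolding e by (simp add: q_def s_def kj)
        then show ?thesis by (simp add: K_def d_def kj)
      qed
      have "(\<Sum>k\<le>N. sqrt (q k)) \<le> (real N + 1) * sqrt K ^ N * (\<Sum>k\<le>N. sqrt (s k))"
        by (rule rec_bound[OF K1 q0 qs nq ns])
      moreover have "nX M N z = (\<Sum>k\<le>N. sqrt (q k))" unfolding nX_def nrm_def q_def ..
      moreover have "nX M N \<delta> = (\<Sum>k\<le>N. sqrt (s k))" unfolding nX_def nrm_def s_def ..
      ultimately show ?thesis unfolding c_def by simp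
    qed
    show "\<exists>z \<in> prodX M w N.
          (\<forall>k\<le>N. AE \<omega> in M. Dg w bx bu sx su x u z (\<lambda>_ _. 0) k \<omega> = \<delta> k \<omega>)
        \<and> (\<forall>z' \<in> prodX M w N.
             (\<forall>k\<le>N. AE \<omega> in M. Dg w bx bu sx su x u z' (\<lambda>_ _. 0) k \<omega> = \<delta> k \<omega>)
             \<longrightarrow> (\<forall>k\<le>N. AE \<omega> in M. z' k \<omega> = z k \<omega>))
        \<and> nX M N z \<le> c * nX M N \<delta>"
      using zP Dgz uniq bound by blast
  next
    fix V :: "(nat \<Rightarrow> 'a \<Rightarrow> real^'m) set" and x y :: "nat \<Rightarrow> 'a \<Rightarrow> real^'n" and u :: "nat \<Rightarrow> 'a \<Rightarrow> real^'m"
    assume V: "V \<subseteq> prodU M w N \<and> closedU M w N V" and x: "x \<in> prodX M w N" and y: "y \<in> prodX M w N"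
      and uV: "u \<in> V"
    have u: "u \<in> prodU M w N" using V uV by auto
    have xF: "x k \<in> borel_measurable (filt M w k)" "integrable M (\<lambda>\<omega>. (norm (x k \<omega>))\<^sup>2)" if "k \<le> N" for k
      using XD[OF x that] by auto
    have yF: "y k \<in> borel_measurable (filt M w k)" "integrable M (\<lambda>\<omega>. (norm (y k \<omega>))\<^sup>2)" if "k \<le> N" for k
      using XD[OF y that] by auto
    have uF: "u k \<in> borel_measurable (filt M w k)" "integrable M (\<lambda>\<omega>. (norm (u k \<omega>))\<^sup>2)" if "k < N" for k
      using UD[OF u that] by auto
    define xp where "xp = rec_nat (\<lambda>\<omega>. x0 - y 0 \<omega>) (\<lambda>k xk \<omega>. b k (xk \<omega>) (u k \<omega>)
        + (\<Sum>i\<in>UNIV. w (Suc k) \<omega> $ i *\<^sub>R sig k (xk \<omega>) (u k \<omega>) i) - y (Suc k) \<omega>)"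
    have xp0: "xp 0 = (\<lambda>\<omega>. x0 - y 0 \<omega>)" by (simp add: xp_def)
    have xpS: "xp (Suc k) = (\<lambda>\<omega>. b k (xp k \<omega>) (u k \<omega>)
        + (\<Sum>i\<in>UNIV. w (Suc k) \<omega> $ i *\<^sub>R sig k (xp k \<omega>) (u k \<omega>) i) - y (Suc k) \<omega>)" for k
      by (simp add: xp_def)
    have gxp: "gmap w x0 b sig xp u k \<omega> = y k \<omega>" for k \<omega>
      by (cases k) (simp_all add: gmap_def xp0 xpS)
    have xpX: "xp k \<in> Xsp M w k" if "k \<le> N" for k
      using that
    proof (induction k)
      case 0
      have "y 0 \<in> Xsp M w 0" using y by (auto simp: prodX_def)
      then obtain cc where "y 0 = (\<lambda>\<omega>. cc)" by (auto simp: Xsp_def)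
      then show ?case by (auto simp: xp0 Xsp_def)
    next
      case (Suc k)
      have kN: "k < N" "k \<le> N" using Suc.prems by auto
      have xk: "xp k \<in> borel_measurable (filt M w k)" "integrable M (\<lambda>\<omega>. (norm (xp k \<omega>))\<^sup>2)"
        using W.Xsp_D[OF kN(2) Suc.IH[OF kN(2)]] by auto
      have "y (Suc k) \<in> Xsp M w (Suc k)" using y Suc.prems by (auto simp: prodX_def)
      then obtain y0 yi where de: "y (Suc k) = (\<lambda>\<omega>. y0 \<omega> + (\<Sum>i\<in>UNIV. (w (Suc k) \<omega> $ i) *\<^sub>R yi i \<omega>))"
        and y0: "y0 \<in> L2F M w k" and yi: "\<And>i. yi i \<in> L2F M w k"
        by (auto simp: Xsp_def)
      let ?A = "\<lambda>\<omega>. b k (xp k \<omega>) (u k \<omega>)"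
      let ?B = "\<lambda>i \<omega>. sig k (xp k \<omega>) (u k \<omega>) i"
      have AF: "?A \<in> borel_measurable (filt M w k)"
        by (rule cont_meas2[OF contb[OF kN(1)] xk(1) uF(1)[OF kN(1)]])
      have BF: "?B i \<in> borel_measurable (filt M w k)" for i
        using cont_meas2[OF contsig[OF kN(1)] xk(1) uF(1)[OF kN(1)]] by simp
      have AI: "integrable M (\<lambda>\<omega>. (norm (?A \<omega>))\<^sup>2)"
        by (rule W.sqi_growth[where C=c0, OF FM[OF AF kN(2)] xk(2) uF(2)[OF kN(1)] growb[OF kN(1)]])
      have BI: "integrable M (\<lambda>\<omega>. (norm (?B i \<omega>))\<^sup>2)" for i
        by (rule W.sqi_growth[where C=c0, OF FM[OF BF kN(2)] xk(2) uF(2)[OF kN(1)] growsig[OF kN(1)]])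
      have y0D: "y0 \<in> borel_measurable (filt M w k)" "integrable M (\<lambda>\<omega>. (norm (y0 \<omega>))\<^sup>2)"
        using W.L2F_D[OF y0] by auto
      have yiD: "yi i \<in> borel_measurable (filt M w k)" "integrable M (\<lambda>\<omega>. (norm (yi i \<omega>))\<^sup>2)" for i
        using W.L2F_D[OF yi] by auto
      have n0: "(\<lambda>\<omega>. ?A \<omega> - y0 \<omega>) \<in> L2F M w k"
        unfolding L2F_def using AF y0D AI
        by (auto intro!: W.sqi_diff FM[OF _ kN(2)])
      have ni: "(\<lambda>\<omega>. ?B i \<omega> - yi i \<omega>) \<in> L2F M w k" for i
        unfolding L2F_def using BF yiD BI
        by (auto intro!: W.sqi_diff FM[OF _ kN(2)])
      have eqz: "xp (Suc k) = (\<lambda>\<omega>. (?A \<omega> - y0 \<omega>) + (\<Sum>i\<in>UNIV. (w (Suc k) \<omega> $ i) *\<^sub>R (?B i \<omega> - yi i \<omega>)))"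
        by (simp add: xpS de scaleR_diff_right sum_subtractf algebra_simps)
      show ?case unfolding Xsp_def
        by (simp, rule exI[of _ "\<lambda>\<omega>. ?A \<omega> - y0 \<omega>"], rule exI[of _ "\<lambda>i \<omega>. ?B i \<omega> - yi i \<omega>"])
          (use eqz n0 ni in simp)
    qed
    have xpD: "xp k \<in> borel_measurable (filt M w k)" "integrable M (\<lambda>\<omega>. (norm (xp k \<omega>))\<^sup>2)" if "k \<le> N" for k
      using W.Xsp_D[OF that xpX[OF that]] by auto
    have xpP: "xp \<in> prodX M w N" using xpX by (auto simp: prodX_def)
    let ?S = "{(x', u'). x' \<in> prodX M w N \<and> u' \<in> V
                \<and> (\<forall>k\<le>N. AE \<omega> in M. gmap w x0 b sig x' u' k \<omega> = y k \<omega>)}"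
    have mem: "(xp, u) \<in> ?S" using xpP uV gxp by simp
    define q where "q k = (\<integral>\<omega>. (norm (xp k \<omega> - x k \<omega>))\<^sup>2 \<partial>M)" for k
    define s where "s k = (\<integral>\<omega>. (norm (gmap w x0 b sig x u k \<omega> - y k \<omega>))\<^sup>2 \<partial>M)" for k
    have nq: "0 \<le> q k" for k unfolding q_def by (rule integral_nonneg_AE) auto
    have ns: "0 \<le> s k" for k unfolding s_def by (rule integral_nonneg_AE) auto
    have q0: "q 0 \<le> s 0" by (simp add: q_def s_def xp0 gmap_def algebra_simps)
    have qs: "q k \<le> K * (q (k-1) + s k)" if "1 \<le> k" "k \<le> N" for k
    proof -
      define j where "j = k - 1"
      have kj: "k = Suc j" using that(1) by (simp add: j_def)
      have jN: "j < N" "j \<le> N" "Suc j \<le> N" using that kj by auto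
      have kk: "Suc j \<in> {1..N}" using that kj by auto
      let ?e = "\<lambda>\<omega>. xp j \<omega> - x j \<omega>"
      let ?A = "\<lambda>\<omega>. b j (xp j \<omega>) (u j \<omega>) - b j (x j \<omega>) (u j \<omega>)"
      let ?B = "\<lambda>i \<omega>. sig j (xp j \<omega>) (u j \<omega>) i - sig j (x j \<omega>) (u j \<omega>) i"
      let ?bx = "\<lambda>\<omega>. b j (x j \<omega>) (u j \<omega>)"
      let ?sx = "\<lambda>i \<omega>. sig j (x j \<omega>) (u j \<omega>) i"
      let ?Sx = "\<lambda>\<omega>. \<Sum>i\<in>UNIV. w (Suc j) \<omega> $ i *\<^sub>R ?sx i \<omega>"
      let ?D = "\<lambda>\<omega>. gmap w x0 b sig x u (Suc j) \<omega> - y (Suc j) \<omega>"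
      have eF: "?e \<in> borel_measurable (filt M w j)" using xpD(1)[OF jN(2)] xF(1)[OF jN(2)] by auto
      have eF': "?e \<in> borel_measurable (filt M w (Suc j - 1))" using eF by simp
      have eI: "integrable M (\<lambda>\<omega>. (norm (?e \<omega>))\<^sup>2)"
        by (rule W.sqi_diff[OF FM[OF xpD(1) jN(2)] FM[OF xF(1) jN(2)] xpD(2) xF(2)]) (use jN in auto)
      have bxpF: "(\<lambda>\<omega>. b j (xp j \<omega>) (u j \<omega>)) \<in> borel_measurable (filt M w j)"
        by (rule cont_meas2[OF contb[OF jN(1)] xpD(1)[OF jN(2)] uF(1)[OF jN(1)]])
      have bxF: "?bx \<in> borel_measurable (filt M w j)"
        by (rule cont_meas2[OF contb[OF jN(1)] xF(1)[OF jN(2)] uF(1)[OF jN(1)]])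
      have sxpF: "(\<lambda>\<omega>. sig j (xp j \<omega>) (u j \<omega>) i) \<in> borel_measurable (filt M w j)" for i
        using cont_meas2[OF contsig[OF jN(1)] xpD(1)[OF jN(2)] uF(1)[OF jN(1)]] by simp
      have sxF: "?sx i \<in> borel_measurable (filt M w j)" for i
        using cont_meas2[OF contsig[OF jN(1)] xF(1)[OF jN(2)] uF(1)[OF jN(1)]] by simp
      have AM: "?A \<in> borel_measurable M" using FM[OF bxpF jN(2)] FM[OF bxF jN(2)] by auto
      have BM: "?B i \<in> borel_measurable M" for i using FM[OF sxpF jN(2)] FM[OF sxF jN(2)] by auto
      have Ab: "norm (?A \<omega>) \<le> c0 * norm (?e \<omega>)" for \<omega> by (rule lipb[OF jN(1)])
      have Bb: "norm (?B i \<omega>) \<le> c0 * norm (?e \<omega>)" for i \<omega> by (rule lipsig[OF jN(1)])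
      have bxI: "integrable M (\<lambda>\<omega>. (norm (?bx \<omega>))\<^sup>2)"
        by (rule W.sqi_growth[where C=c0, OF FM[OF bxF jN(2)] xF(2)[OF jN(2)] uF(2)[OF jN(1)] growb[OF jN(1)]])
      have sxI: "integrable M (\<lambda>\<omega>. (norm (?sx i \<omega>))\<^sup>2)" for i
        by (rule W.sqi_growth[where C=c0, OF FM[OF sxF jN(2)] xF(2)[OF jN(2)] uF(2)[OF jN(1)] growsig[OF jN(1)]])
      have sxF': "?sx i \<in> borel_measurable (filt M w (Suc j - 1))" for i using sxF by simp
      have SxI: "integrable M (\<lambda>\<omega>. (norm (?Sx \<omega>))\<^sup>2)"
        by (rule W.sqsum[OF kk sxF' sxI])
      have SxM: "?Sx \<in> borel_measurable M"
        by (rule W.sum_meas[OF W.wm[OF kk]]) (use FM[OF sxF jN(2)] in auto)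
      have x1: "x (Suc j) \<in> borel_measurable M" "integrable M (\<lambda>\<omega>. (norm (x (Suc j) \<omega>))\<^sup>2)"
        using FM[OF xF(1)[OF jN(3)] jN(3)] xF(2)[OF jN(3)] by auto
      have y1: "y (Suc j) \<in> borel_measurable M" "integrable M (\<lambda>\<omega>. (norm (y (Suc j) \<omega>))\<^sup>2)"
        using FM[OF yF(1)[OF jN(3)] jN(3)] yF(2)[OF jN(3)] by auto
      have bxM: "?bx \<in> borel_measurable M" using FM[OF bxF jN(2)] .
      have g1: "(\<lambda>\<omega>. ?bx \<omega> + ?Sx \<omega>) \<in> borel_measurable M" using bxM SxM by auto
      have g1I: "integrable M (\<lambda>\<omega>. (norm (?bx \<omega> + ?Sx \<omega>))\<^sup>2)"
        by (rule W.sqi_add[OF bxM SxM bxI SxI])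
      have g2: "(\<lambda>\<omega>. ?bx \<omega> + ?Sx \<omega> - x (Suc j) \<omega>) \<in> borel_measurable M" using g1 x1 by auto
      have g2I: "integrable M (\<lambda>\<omega>. (norm (?bx \<omega> + ?Sx \<omega> - x (Suc j) \<omega>))\<^sup>2)"
        by (rule W.sqi_diff[OF g1 x1(1) g1I x1(2)])
      have gD: "gmap w x0 b sig x u (Suc j) \<omega> = ?bx \<omega> + ?Sx \<omega> - x (Suc j) \<omega>" for \<omega>
        by (simp add: gmap_def)
      have DM: "?D \<in> borel_measurable M" unfolding gD using g2 y1 by auto
      have DI: "integrable M (\<lambda>\<omega>. (norm (?D \<omega>))\<^sup>2)" unfolding gD
        by (rule W.sqi_diff[OF g2 y1(1) g2I y1(2)])
      note st = W.step[where k="Suc j" and c=c0 and e'="?e" and A="?A" and B="?B" and D="?D",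
            OF kk c0(1) eF' eI AM Ab BM Bb DM DI]
      have pe: "?A \<omega> + (\<Sum>i\<in>UNIV. w (Suc j) \<omega> $ i *\<^sub>R ?B i \<omega>) + ?D \<omega> = xp k \<omega> - x k \<omega>" for \<omega>
        by (simp add: kj xpS gmap_def scaleR_diff_right sum_subtractf algebra_simps)
      have "q k \<le> 4 * (c0\<^sup>2 + (real CARD('d))\<^sup>2 * c0\<^sup>2 + 1) * (q j + s k)"
        using st(2) unfolding pe by (simp add: q_def s_def kj)
      then show ?thesis by (simp add: K_def d_def kj)
    qed
    have rb: "(\<Sum>k\<le>N. sqrt (q k)) \<le> (real N + 1) * sqrt K ^ N * (\<Sum>k\<le>N. sqrt (s k))"
      by (rule rec_bound[OF K1 q0 qs nq ns])
    have nrm0: "0 \<le> nrm M f" for f :: "'a \<Rightarrow> 'v::real_normed_vector"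
      unfolding nrm_def by (simp add: integral_nonneg_AE)
    have "distX M N (x, u) ?S \<le> nX M N (x - xp) + nU M N (u - u)"
      unfolding distX_def
    proof (rule cInf_lower)
      show "nX M N (x - xp) + nU M N (u - u) \<in> (\<lambda>q. nX M N (fst (x, u) - fst q) + nU M N (snd (x, u) - snd q)) ` ?S"
        using mem by force
      show "bdd_below ((\<lambda>q. nX M N (fst (x, u) - fst q) + nU M N (snd (x, u) - snd q)) ` ?S)"
        by (rule bdd_belowI[of _ 0]) (auto simp: nX_def nU_def intro!: add_nonneg_nonneg sum_nonneg nrm0)
    qed
    moreover have "nU M N (u - u) = 0" by (simp add: nU_def nrm_def)
    moreover have "nX M N (x - xp) = (\<Sum>k\<le>N. sqrt (q k))"
      unfolding nX_def nrm_def q_def by (simp add: norm_minus_commute)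
    moreover have "nX M N (gmap w x0 b sig x u - y) = (\<Sum>k\<le>N. sqrt (s k))"
      unfolding nX_def nrm_def s_def by simp
    ultimately show "distX M N (x, u) ?S \<le> c * nX M N (gmap w x0 b sig x u - y)"
      using rb unfolding c_def by simp
  qed
qed


end
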